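(* Let $N=2n+1$ and let $(\mathcal X'_k)_{0\le k\le n}$ be the skeleton chain of the ternary coalescent started from $N$ particles of mass $1$. Let $0\le l\le n$ and $\mathbf s=(s_1,\dots,s_{N-2l})\in\mathcal S^\downarrow$ with every $s_i$ an odd positive integer and $s_1+\dots+s_{N-2l}=N$. Then $$\mathbb P(\mathcal X'_l=\mathbf s)=\gamma(\mathbf s)\,\frac{N}{N-2l}\binom{N}{l}^{-1}\prod_{i=1}^{N-2l}\frac1{s_i}\binom{s_i}{\frac{s_i+1}{2}}.$$
   Context: $\mathcal S^\downarrow$ is the set of nonincreasing sequences $s_1\ge s_2\ge\dots\ge0$ with finitely many nonzero terms, identified with their nonzero entries. The ternary coalescent is the continuous-time Markov jump process on $\mathcal S^\downarrow$ in which each triple of distinct particles with masses $a,b,c$ merges into one particle of mass $a+b+c$ at rate $a+b+c+3$; with $T_0=0$ and $T_k$ the $k$-th coagulation time, the skeleton chain is $\mathcal X'_k=\mathcal X(T_k)$. For $\mathbf s=(s_1,\dots,s_m)$ with nonzero entries, if $s_{l_1},\dots,s_{l_p}$ are its distinct values with multiplicities $k_1,\dots,k_p$, then $\gamma(\mathbf s)=\binom{m}{k_1,\dots,k_p}$ (the number of distinct $m$-tuples formed from the entries). *)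

theory Defs
  imports "HOL-Probability.Probability" "HOL-Library.Multiset"
begin

text \<open>States of the coalescent: finite multisets of positive masses (the nonzero
entries of an element of S-down). Particles are distinguishable; we index them
by positions in the sorted list of the multiset.\<close>

definition index_triples :: "nat \<Rightarrow> (nat \<times> nat \<times> nat) set" where
  "index_triples m = {(i, j, k). i < j \<and> j < k \<and> k < m}"

definition triple_rate :: "nat list \<Rightarrow> nat \<times> nat \<times> nat \<Rightarrow> nat" where
  "triple_rate xs t = (case t of (i, j, k) \<Rightarrow> xs ! i + xs ! j + xs ! k + 3)"

definition merge_triple :: "nat list \<Rightarrow> nat \<times> nat \<times> nat \<Rightarrow> nat multiset" where
  "merge_triple xs t = (case t of (i, j, k) \<Rightarrow>
      mset xs - {# xs ! i, xs ! j, xs ! k #} + {# xs ! i + xs ! j + xs ! k #})"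

text \<open>One step of the skeleton chain: the triple that merges is chosen with
probability proportional to its rate a+b+c+3 (rates are natural numbers, so a
weighted multiset of triples gives the jump distribution).\<close>

definition ternary_step :: "nat multiset \<Rightarrow> nat multiset pmf" where
  "ternary_step M =
     (if size M < 3 then return_pmf M
      else (let xs = sorted_list_of_multiset M in
            map_pmf (merge_triple xs)
              (pmf_of_multiset
                 (\<Sum>t\<in>index_triples (length xs). replicate_mset (triple_rate xs t) t))))"

primrec skeleton_chain :: "nat \<Rightarrow> nat \<Rightarrow> nat multiset pmf" where
  "skeleton_chain N 0 = return_pmf (replicate_mset N 1)"
| "skeleton_chain N (Suc k) = bind_pmf (skeleton_chain N k) ternary_step"

definition gamma_coef :: "nat list \<Rightarrow> real" where
  "gamma_coef s = fact (length s) / (\<Prod>v\<in>set s. fact (count_list s v))"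

end

theory Submission
  imports Defs "HOL-Combinatorics.Permutations" "HOL-Combinatorics.Multiset_Permutations"
begin


definition fo :: "nat \<Rightarrow> real" where
  "fo x = (if odd x then real (x choose ((x+1) div 2)) / real x else 0)"

definition sq :: "nat \<Rightarrow> real" where "sq k = ((1/2::real) gchoose k) * (-4)^k"

lemma sq_rec: "real (Suc k) * sq (Suc k) = (4 * real k - 2) * sq k"
proof -
  have "real (Suc k) * ((1/2::real) gchoose Suc k) = (1/2 - real k) * ((1/2::real) gchoose k)"
    using gbinomial_mult_1[of "1/2::real" k] by (simp add: algebra_simps)
  have "real (Suc k) * sq (Suc k) = (real (Suc k) * ((1/2::real) gchoose Suc k)) * (-4)^Suc k"
    unfolding sq_def by (simp add: algebra_simps)
  also have "\<dots> = (1/2 - real k) * (-4) * (((1/2::real) gchoose k) * (-4)^k)"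
    unfolding \<open>real (Suc k) * ((1/2::real) gchoose Suc k) = _\<close> by (simp add: algebra_simps)
  also have "\<dots> = (4 * real k - 2) * sq k" unfolding sq_def by (simp add: algebra_simps)
  finally show ?thesis .
qed

lemma gen_fo_aux: fixes F B x::real assumes "B > 0" "x \<ge> 0" shows
     "(2*x+3) * (2*x+2) * F / ((x+2) * ((x+1)*B) * ((x+1)*B)) / (2*x+3) * (x+2)
     = (4*x+2) * (F / ((x+1)*B * B) / (2*x+1))"
proof -
  define e where "e = x+1"
  have e: "e \<ge> 1" "x = e - 1" using assms by (auto simp: e_def)
  have nz: "e+1 \<noteq> 0" "2*e+1 \<noteq> 0" "2*e-1 \<noteq> 0" "e \<noteq> 0" "B \<noteq> 0" using e(1) assms(1) by auto
  have "(2*x+3) * (2*x+2) * F / ((x+2) * ((x+1)*B) * ((x+1)*B)) / (2*x+3) * (x+2)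
     = (2*e+1) * (2*e) * F / ((e+1) * (e*B) * (e*B)) / (2*e+1) * (e+1)" by (simp add: e algebra_simps)
  also have "\<dots> = 2 * (F / (e*B*B))" using nz by simp
  also have "\<dots> = (2*(2*e-1)) * (F / (e*B * B) / (2*e-1))" using nz(3) by (simp add: divide_simps)
  also have "\<dots> = (4*x+2) * (F / ((x+1)*B * B) / (2*x+1))" by (simp add: e algebra_simps)
  finally show ?thesis .
qed

lemma fo_rec: "fo (2*k+3) * (real k + 2) = (4 * real k + 2) * fo (2*k+1)"
proof -
  have c: "(2*k+3+1) div 2 = k+2" "(2*k+1+1) div 2 = k+1" "odd (2*k+3)" "odd (2*k+1)" by auto
  have a: "real ((2*k+3) choose (k+2)) = fact (2*k+3) / (fact (k+2) * fact (k+1))"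
    by (subst binomial_fact) (auto simp: numeral_eq_Suc)
  have b: "real ((2*k+1) choose (k+1)) = fact (2*k+1) / (fact (k+1) * fact k)"
    by (subst binomial_fact) auto
  have h1: "fo (2*k+1) = fact (2*k+1) / (fact (k+1) * fact k) / real (2*k+1)"
    unfolding fo_def using c b by simp
  have h2: "fo (2*k+3) = fact (2*k+3) / (fact (k+2) * fact (k+1)) / real (2*k+3)"
    unfolding fo_def using c a by simp
  have f1: "(fact (2*k+3) :: real) = real (2*k+3) * real (2*k+2) * fact (2*k+1)"
    by (simp add: numeral_eq_Suc fact_Suc algebra_simps)
  have f2: "(fact (k+2) :: real) = real (k+2) * fact (k+1)"
    by (simp add: numeral_eq_Suc fact_Suc algebra_simps)
  have f3: "(fact (k+1) :: real) = real (k+1) * fact k" by simp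
  have pos: "(fact k :: real) > 0" by auto
  show ?thesis unfolding h1 h2 f1 f2 f3 using gen_fo_aux[OF pos, of "real k" "fact (2*k+1)"]
    by (simp add: algebra_simps)
qed

lemma fo_sq: "fo (2*k+1) = - sq (Suc k) / 2"
proof (induction k)
  case 0 then show ?case by (simp add: fo_def sq_def)
next
  case (Suc k)
  have "fo (2*Suc k+1) * (real k + 2) = (4 * real k + 2) * fo (2*k+1)"
    using fo_rec[of k] by (simp add: numeral_eq_Suc)
  moreover have "real (Suc (Suc k)) * sq (Suc (Suc k)) = (4 * real (Suc k) - 2) * sq (Suc k)"
    by (rule sq_rec)
  ultimately have e1: "fo (2*Suc k+1) = (4 * real k + 2) * fo (2*k+1) / (real k + 2)"
    and e2: "sq (Suc (Suc k)) = (4 * real (Suc k) - 2) * sq (Suc k) / (real k + 2)"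
    by (simp_all add: field_simps)
  show ?case unfolding e1 e2 Suc by (simp add: field_simps)
qed

lemma sq_vdm0: "(\<Sum>j\<le>n. sq j * sq (n - j)) = ((1::real) gchoose n) * (-4)^n"
proof -
  have "(\<Sum>j\<le>n. sq j * sq (n - j)) = (\<Sum>j\<le>n. ((1/2::real) gchoose j) * ((1/2) gchoose (n - j)) * (-4)^n)"
  proof (rule sum.cong[OF refl])
    fix j assume "j \<in> {..n}"
    then have "(-4::real)^j * (-4)^(n-j) = (-4)^n" by (simp flip: power_add)
    then show "sq j * sq (n - j) = ((1/2::real) gchoose j) * ((1/2) gchoose (n - j)) * (-4)^n"
    proof -
      have "sq j * sq (n - j) = (((1/2::real) gchoose j) * ((1/2) gchoose (n - j))) * ((-4::real)^j * (-4)^(n-j))"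
        unfolding sq_def by (simp only: mult_ac)
      then show ?thesis using \<open>(-4::real)^j * (-4)^(n-j) = (-4)^n\<close> by simp
    qed
  qed
  also have "\<dots> = (\<Sum>j\<le>n. ((1/2::real) gchoose j) * ((1/2) gchoose (n - j))) * (-4)^n"
    by (simp add: sum_distrib_right)
  also have "(\<Sum>j\<le>n. ((1/2::real) gchoose j) * ((1/2) gchoose (n - j))) = (1/2 + 1/2) gchoose n"
    using gbinomial_Vandermonde[of "1/2::real" "1/2" n] by (simp add: atLeast0AtMost)
  finally show ?thesis by simp
qed

lemma sq_vdm: "(\<Sum>i\<le>k. sq (Suc i) * sq (Suc (k - i))) = -2 * sq (k+2)"
proof -
  have z: "((1::real) gchoose (k+2)) = 0"
    using binomial_gbinomial[of 1 "k+2", where 'a=real] by simp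
  have "(\<Sum>j\<le>Suc (Suc k). sq j * sq (Suc (Suc k) - j)) = 0"
    using sq_vdm0[of "Suc (Suc k)"] z by (simp add: numeral_eq_Suc)
  moreover have "(\<Sum>j\<le>Suc (Suc k). sq j * sq (Suc (Suc k) - j))
      = sq (k+2) + ((\<Sum>i\<le>k. sq (Suc i) * sq (Suc (k - i))) + sq (k+2))"
  proof -
    have s0: "sq 0 = 1" by (simp add: sq_def)
    have c: "(\<Sum>i\<le>k. sq (Suc i) * sq (Suc (Suc k) - Suc i)) = (\<Sum>i\<le>k. sq (Suc i) * sq (Suc (k - i)))"
      by (rule sum.cong[OF refl]) (simp add: Suc_diff_le)
    show ?thesis
      apply (subst sum.atMost_Suc_shift)
      apply (subst sum.atMost_Suc)
      apply (simp only: s0 c diff_self_eq_0 diff_zero mult_1_left mult_1_right)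
      apply (simp add: numeral_eq_Suc)
      done
  qed
  ultimately show ?thesis by simp
qed

lemma cat_conv: "(\<Sum>i\<le>k. fo (2*i+1) * fo (2*(k-i)+1)) = fo (2*k+3)"
proof -
  have "(\<Sum>i\<le>k. fo (2*i+1) * fo (2*(k-i)+1)) = (\<Sum>i\<le>k. sq (Suc i) * sq (Suc (k - i))) / 4"
    unfolding sum_divide_distrib proof (rule sum.cong[OF refl])
    fix x
    have "fo (2*x+1) * fo (2*(k-x)+1) = (- sq (Suc x) / 2) * (- sq (Suc (k-x)) / 2)"
      by (simp only: fo_sq)
    then show "fo (2*x+1) * fo (2*(k-x)+1) = sq (Suc x) * sq (Suc (k - x)) / 4" by simp
  qed
  also have "\<dots> = - sq (Suc (Suc k)) / 2" by (simp add: sq_vdm numeral_eq_Suc)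
  also have "\<dots> = fo (2*k+3)" using fo_sq[of "Suc k"] by (simp add: numeral_eq_Suc)
  finally show ?thesis .
qed

lemma fo_even: "even x \<Longrightarrow> fo x = 0" by (simp add: fo_def)

lemma fo_1: "fo 1 = 1" by (simp add: fo_def)

lemma sum_odd:
  assumes "\<And>b. even b \<Longrightarrow> g b = 0"
  shows "(\<Sum>b\<le>(y::nat). g b) = (\<Sum>i<(y+1) div 2. g (2*i+1))"
proof (induction y)
  case 0 then show ?case using assms[of 0] by simp
next
  case (Suc y)
  show ?case
  proof (cases "even (Suc y)")
    case True
    then have "(Suc y + 1) div 2 = (y+1) div 2" by presburger
    then show ?thesis using Suc True assms[of "Suc y"] by simp
  next
    case False
    then have e: "(Suc y + 1) div 2 = Suc ((y+1) div 2)" "2 * ((y+1) div 2) + 1 = Suc y" by presburger+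
    show ?thesis unfolding e(1) sum.lessThan_Suc e(2) using Suc by simp
  qed
qed

lemma C2: "(\<Sum>b\<le>y. fo b * fo (y-b)) = (if even y \<and> y > 0 then fo (y+1) else 0)"
proof (cases "even y \<and> y > 0")
  case True
  then obtain k where k: "y = 2*k+2" by (metis evenE gr0_conv_Suc dvd_0_right mult_Suc_right add_2_eq_Suc' Suc_eq_plus1 odd_Suc_minus_one even_Suc not0_implies_Suc nat.simps(3) add.commute)
  have "(\<Sum>b\<le>y. fo b * fo (y-b)) = (\<Sum>i<(y+1) div 2. fo (2*i+1) * fo (y - (2*i+1)))"
    by (rule sum_odd) (simp add: fo_even)
  also have "(y+1) div 2 = Suc k" using k by simp
  also have "(\<Sum>i<Suc k. fo (2*i+1) * fo (y - (2*i+1))) = (\<Sum>i\<le>k. fo (2*i+1) * fo (2*(k-i)+1))"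
    unfolding lessThan_Suc_atMost proof (rule sum.cong[OF refl])
    fix i assume "i \<in> {..k}"
    then have "y - (2*i+1) = 2*(k-i)+1" using k by auto
    then show "fo (2*i+1) * fo (y - (2*i+1)) = fo (2*i+1) * fo (2*(k-i)+1)" by simp
  qed
  also have "\<dots> = fo (2*k+3)" by (rule cat_conv)
  finally show ?thesis using True k by (simp add: numeral_eq_Suc)
next
  case False
  have "fo b * fo (y-b) = 0" if "b \<le> y" for b
  proof (cases "even b")
    case True then show ?thesis by (simp add: fo_even)
  next
    case F: False
    then have "even (y - b)" using False that by (cases "y = 0") (auto simp: even_diff_nat)
    then show ?thesis by (simp add: fo_even)
  qed
  then have "(\<Sum>b\<le>y. fo b * fo (y-b)) = 0" by (intro sum.neutral) auto
  then show ?thesis using False by auto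
qed

lemma C3: "(real x + 3) * (\<Sum>a\<le>x. fo a * (\<Sum>b\<le>x-a. fo b * fo (x-a-b))) = 3 * (real x - 1) * fo x"
proof (cases "even x")
  case True
  have "fo a * (\<Sum>b\<le>x-a. fo b * fo (x-a-b)) = 0" if "a \<le> x" for a
  proof (cases "even a")
    case True then show ?thesis by (simp add: fo_even)
  next
    case F: False
    then have "odd (x - a)" using True that by (simp add: even_diff_nat)
    then show ?thesis unfolding C2 by simp
  qed
  then have "(\<Sum>a\<le>x. fo a * (\<Sum>b\<le>x-a. fo b * fo (x-a-b))) = 0"
    by (intro sum.neutral) auto
  then show ?thesis using True by (simp add: fo_even)
next
  case False
  then obtain K where K: "x = 2*K+1" using oddE by blast
  have "(\<Sum>a\<le>x. fo a * (\<Sum>b\<le>x-a. fo b * fo (x-a-b)))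
      = (\<Sum>i<(x+1) div 2. fo (2*i+1) * (\<Sum>b\<le>x-(2*i+1). fo b * fo (x-(2*i+1)-b)))"
    by (rule sum_odd) (simp add: fo_even)
  also have "(x+1) div 2 = Suc K" using K by simp
  also have "(\<Sum>i<Suc K. fo (2*i+1) * (\<Sum>b\<le>x-(2*i+1). fo b * fo (x-(2*i+1)-b)))
      = (\<Sum>i<Suc K. fo (2*i+1) * (if i < K then fo (2*(K-i)+1) else 0))"
  proof (rule sum.cong[OF refl])
    fix i assume "i \<in> {..<Suc K}"
    then have "x - (2*i+1) = 2*(K-i)" "2*(K-i)+1 = 2*(K-i)+1" using K by auto
    then show "fo (2*i+1) * (\<Sum>b\<le>x-(2*i+1). fo b * fo (x-(2*i+1)-b)) = fo (2*i+1) * (if i < K then fo (2*(K-i)+1) else 0)"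
      unfolding C2 by auto
  qed
  also have "\<dots> = (\<Sum>i<K. fo (2*i+1) * fo (2*(K-i)+1))" by (simp add: sum.lessThan_Suc)
  also have "\<dots> = fo (2*K+3) - fo (2*K+1)"
    using cat_conv[of K] by (simp add: lessThan_Suc_atMost[symmetric] sum.lessThan_Suc fo_1[unfolded One_nat_def])
  finally have e: "(\<Sum>a\<le>x. fo a * (\<Sum>b\<le>x-a. fo b * fo (x-a-b))) = fo (2*K+3) - fo (2*K+1)" .
  show ?thesis unfolding e using fo_rec[of K] K by (simp add: algebra_simps)
qed



definition UL :: "nat \<Rightarrow> nat \<Rightarrow> nat list set" where
  "UL N m = {u. length u = m \<and> set u \<subseteq> {..N}}"

definition Kw :: "nat \<Rightarrow> nat list \<Rightarrow> real" where
  "Kw N u = (if sum_list u = N then prod_list (map fo u) else 0)"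

definition PT :: "nat \<Rightarrow> (nat \<times> nat) set" where
  "PT m = {(i, j). i < j \<and> j < m}"

lemma finite_UL[simp]: "finite (UL N m)"
proof -
  have "UL N m = {xs. set xs \<subseteq> {..N} \<and> length xs = m}" by (auto simp: UL_def)
  then show ?thesis using finite_lists_length_eq[of "{..N}" m] by simp
qed

lemma UL_Suc_sum:
  "(\<Sum>u\<in>UL N (Suc k). g u) = (\<Sum>v\<in>UL N k. \<Sum>a\<le>N. g (v @ [a]))"
proof -
  have im: "UL N (Suc k) = (\<lambda>(v,a). v @ [a]) ` (UL N k \<times> {..N})"
  proof
    show "UL N (Suc k) \<subseteq> (\<lambda>(v,a). v @ [a]) ` (UL N k \<times> {..N})"
    proof
      fix u assume u: "u \<in> UL N (Suc k)"
      then have "u \<noteq> []" by (auto simp: UL_def)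
      then have "u = butlast u @ [last u]" by simp
      moreover have "butlast u \<in> UL N k"
        using u \<open>u \<noteq> []\<close> by (auto simp: UL_def dest: in_set_butlastD)
      moreover have "last u \<in> {..N}"
        using u \<open>u \<noteq> []\<close> last_in_set[of u] unfolding UL_def by blast
      ultimately show "u \<in> (\<lambda>(v,a). v @ [a]) ` (UL N k \<times> {..N})" by force
    qed
  qed (auto simp: UL_def)
  have inj: "inj_on (\<lambda>(v,a). v @ [a]) (UL N k \<times> {..N})"
    by (auto simp: inj_on_def)
  show ?thesis unfolding im sum.reindex[OF inj] sum.cartesian_product
    by (rule sum.cong) (auto split: prod.splits)
qed

lemma UL_perm_sum:
  assumes p: "p permutes {..<m}"
  shows "(\<Sum>u\<in>UL N m. g u) = (\<Sum>u\<in>UL N m. g (permute_list p u))"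
proof (rule sum.reindex_bij_witness[where j="permute_list (inv p)" and i="permute_list p"])
  fix u assume u: "u \<in> UL N m"
  then have l: "length u = m" by (simp add: UL_def)
  have pi: "inv p permutes {..<m}" using permutes_inv[OF p] .
  show "permute_list p (permute_list (inv p) u) = u"
    using permute_list_compose[where f="inv p" and g=p and xs=u] p l
    by (simp add: permutes_inv_o(2)[OF p])
  show "permute_list (inv p) u \<in> UL N m" using u pi l by (simp add: UL_def)
  show "g (permute_list p (permute_list (inv p) u)) = g u"
    using permute_list_compose[where f="inv p" and g=p and xs=u] p l
    by (simp add: permutes_inv_o(2)[OF p])
next
  fix u assume u: "u \<in> UL N m"
  then have l: "length u = m" by (simp add: UL_def)
  have pi: "inv p permutes {..<m}" using permutes_inv[OF p] .
  show "permute_list (inv p) (permute_list p u) = u"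
    using permute_list_compose[where f=p and g="inv p" and xs=u] pi l
    by (simp add: permutes_inv_o(1)[OF p])
  show "permute_list p u \<in> UL N m" using u p l by (simp add: UL_def)
qed

lemma Kw_mset: "mset u = mset v \<Longrightarrow> Kw N u = Kw N v"
proof -
  assume h: "mset u = mset v"
  have "sum_list u = sum_list v" by (metis h sum_mset_sum_list)
  moreover have "prod_list (map fo u) = prod_list (map fo v)"
    by (metis h mset_map prod_mset_prod_list)
  ultimately show ?thesis by (simp add: Kw_def)
qed

lemma finite_PT[simp]: "finite (PT m)"
  by (rule finite_subset[of _ "{..<m} \<times> {..<m}"]) (auto simp: PT_def)

lemma finite_IT[simp]: "finite (index_triples m)"
  by (rule finite_subset[of _ "{..<m} \<times> {..<m} \<times> {..<m}"]) (auto simp: index_triples_def)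

lemma PT_Suc: "PT (Suc m) = PT m \<union> (\<lambda>i. (i, m)) ` {..<m}"
  by (auto simp: PT_def)

lemma IT_Suc: "index_triples (Suc m) = index_triples m \<union> (\<lambda>(i,j). (i, j, m)) ` PT m"
proof (rule set_eqI)
  fix t :: "nat \<times> nat \<times> nat"
  obtain a b c where t: "t = (a,b,c)" by (cases t) auto
  show "t \<in> index_triples (Suc m) \<longleftrightarrow> t \<in> index_triples m \<union> (\<lambda>(i,j). (i, j, m)) ` PT m"
    unfolding t by (auto simp: PT_def index_triples_def image_iff less_Suc_eq)
qed

lemma PT_sum:
  fixes g :: "nat \<Rightarrow> real"
  shows "(\<Sum>(i,j)\<in>PT m. c + g i + g j) = c * real m * (real m - 1) / 2 + (real m - 1) * (\<Sum>i<m. g i)"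
proof (induction m)
  case 0 then show ?case by (simp add: PT_def)
next
  case (Suc m)
  have d: "PT m \<inter> (\<lambda>i. (i, m)) ` {..<m} = {}" by (auto simp: PT_def)
  have inj: "inj_on (\<lambda>i. (i, m)) {..<m}" by (auto simp: inj_on_def)
  have "(\<Sum>(i,j)\<in>PT (Suc m). c + g i + g j) = (\<Sum>(i,j)\<in>PT m. c + g i + g j) + (\<Sum>i<m. c + g i + g m)"
    unfolding PT_Suc by (subst sum.union_disjoint) (use d in \<open>auto simp: sum.reindex[OF inj]\<close>)
  also have "(\<Sum>i<m. c + g i + g m) = real m * (c + g m) + (\<Sum>i<m. g i)"
    by (simp add: sum.distrib algebra_simps)
  finally show ?case using Suc by (simp add: field_simps)
qed

lemma IT_sum:
  fixes g :: "nat \<Rightarrow> real"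
  shows "(\<Sum>(i,j,k)\<in>index_triples m. c + g i + g j + g k)
     = c * real m * (real m - 1) * (real m - 2) / 6 + (real m - 1) * (real m - 2) / 2 * (\<Sum>i<m. g i)"
proof (induction m)
  case 0
  have "index_triples 0 = {}" by (auto simp: index_triples_def)
  then show ?case by simp
next
  case (Suc m)
  have d: "index_triples m \<inter> (\<lambda>(i,j). (i, j, m)) ` PT m = {}" by (auto simp: PT_def index_triples_def)
  have inj: "inj_on (\<lambda>(i,j). (i, j, m)) (PT m)" by (auto simp: inj_on_def)
  have "(\<Sum>(i,j,k)\<in>index_triples (Suc m). c + g i + g j + g k)
      = (\<Sum>(i,j,k)\<in>index_triples m. c + g i + g j + g k) + (\<Sum>(i,j)\<in>PT m. (c + g m) + g i + g j)"
  proof -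
    have "(\<Sum>t\<in>(\<lambda>(i,j). (i, j, m)) ` PT m. (case t of (i,j,k) \<Rightarrow> c + g i + g j + g k))
        = (\<Sum>(i,j)\<in>PT m. (c + g m) + g i + g j)"
      unfolding sum.reindex[OF inj] by (rule sum.cong) (auto simp: algebra_simps)
    then show ?thesis unfolding IT_Suc by (subst sum.union_disjoint) (use d in auto)
  qed
  also have "(\<Sum>(i,j)\<in>PT m. (c + g m) + g i + g j) = (c + g m) * real m * (real m - 1) / 2 + (real m - 1) * (\<Sum>i<m. g i)"
    by (rule PT_sum)
  finally show ?case using Suc by (simp add: algebra_simps add_divide_distrib diff_divide_distrib)
qed

definition Tsum :: "nat list \<Rightarrow> nat multiset \<Rightarrow> real" where
  "Tsum xs M' = (\<Sum>t\<in>index_triples (length xs).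
      if merge_triple xs t = M' then real (triple_rate xs t) else 0)"

definition Rsum :: "nat list \<Rightarrow> real" where
  "Rsum xs = (\<Sum>t\<in>index_triples (length xs). real (triple_rate xs t))"

lemma card_IT: "real (card (index_triples m)) = real m * (real m - 1) * (real m - 2) / 6"
proof -
  have "real (card (index_triples m)) = (\<Sum>(i,j,k)\<in>index_triples m. 1 + (\<lambda>_. 0::real) i + (\<lambda>_. 0) j + (\<lambda>_. 0) k)"
    by (simp add: split_def)
  also have "\<dots> = real m * (real m - 1) * (real m - 2) / 6" unfolding IT_sum by simp
  finally show ?thesis .
qed

lemma Rsum_formula:
  "Rsum xs = 3 * real (length xs) * (real (length xs) - 1) * (real (length xs) - 2) / 6
     + (real (length xs) - 1) * (real (length xs) - 2) / 2 * real (sum_list xs)"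
proof -
  have "Rsum xs = (\<Sum>(i,j,k)\<in>index_triples (length xs). 3 + (\<lambda>i. real (xs!i)) i + (\<lambda>i. real (xs!i)) j + (\<lambda>i. real (xs!i)) k)"
    unfolding Rsum_def triple_rate_def by (rule sum.cong) (auto simp: algebra_simps)
  also have "\<dots> = 3 * real (length xs) * (real (length xs) - 1) * (real (length xs) - 2) / 6
     + (real (length xs) - 1) * (real (length xs) - 2) / 2 * (\<Sum>i<length xs. real (xs!i))"
    by (rule IT_sum)
  also have "(\<Sum>i<length xs. real (xs!i)) = real (sum_list xs)"
    by (simp add: sum_list_sum_nth atLeast0LessThan)
  finally show ?thesis .
qed

lemma size_sum_mset_fin: "finite A \<Longrightarrow> size (sum (f :: _ \<Rightarrow> _ multiset) A) = (\<Sum>a\<in>A. size (f a))"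
  by (induction A rule: finite_induct) auto

lemma step_pmf:
  assumes "3 \<le> size M"
  shows "pmf (ternary_step M) M' = Tsum (sorted_list_of_multiset M) M' / Rsum (sorted_list_of_multiset M)"
proof -
  define xs where "xs = sorted_list_of_multiset M"
  define W where "W = (\<Sum>t\<in>index_triples (length xs). replicate_mset (triple_rate xs t) t)"
  have lxs: "length xs = size M" unfolding xs_def by (metis mset_sorted_list_of_multiset size_mset)
  have cnt: "count W t = (if t \<in> index_triples (length xs) then triple_rate xs t else 0)" for t
    unfolding W_def count_sum by (simp add: count_replicate_mset)
  have pos: "triple_rate xs t > 0" for t by (simp add: triple_rate_def split: prod.splits)
  have setW: "set_mset W = index_triples (length xs)"
    using pos by (auto simp: cnt simp flip: count_greater_zero_iff split: if_splits)
  have szW: "size W = (\<Sum>t\<in>index_triples (length xs). triple_rate xs t)"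
    unfolding W_def by (simp add: size_sum_mset_fin)
  have "(0,1,2) \<in> index_triples (length xs)" using assms lxs by (simp add: index_triples_def)
  then have Wne: "W \<noteq> {#}" using setW by auto
  have step: "ternary_step M = map_pmf (merge_triple xs) (pmf_of_multiset W)"
    unfolding ternary_step_def xs_def W_def using assms by (simp add: Let_def)
  have "pmf (ternary_step M) M' = measure (pmf_of_multiset W) (merge_triple xs -` {M'})"
    unfolding step pmf_map ..
  also have "\<dots> = measure (pmf_of_multiset W) (merge_triple xs -` {M'} \<inter> set_pmf (pmf_of_multiset W))"
    by (rule measure_Int_set_pmf[symmetric])
  also have "\<dots> = (\<Sum>t\<in>merge_triple xs -` {M'} \<inter> index_triples (length xs). real (count W t) / real (size W))"
    using Wne setW by (subst measure_measure_pmf_finite) (auto simp: pmf_of_multiset[OF Wne])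
  also have "merge_triple xs -` {M'} \<inter> index_triples (length xs) = {t \<in> index_triples (length xs). merge_triple xs t = M'}"
    by auto
  also have "(\<Sum>t\<in>{t \<in> index_triples (length xs). merge_triple xs t = M'}. real (count W t) / real (size W))
      = (\<Sum>t\<in>index_triples (length xs). if merge_triple xs t = M' then real (triple_rate xs t) else 0) / real (size W)"
    by (simp add: sum.inter_filter sum_divide_distrib cnt) (rule sum.cong, auto)
  also have "real (size W) = Rsum xs" unfolding szW Rsum_def by simp
  finally show ?thesis unfolding Tsum_def xs_def .
qed

definition T3 :: "nat \<Rightarrow> nat set set" where
  "T3 m = {S. S \<subseteq> {..<m} \<and> card S = 3}"

lemma IT_T3_bij: "bij_betw (\<lambda>(i,j,k). {i,j,k}) (index_triples m) (T3 m)"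
proof (rule bij_betwI')
  fix x y assume x: "x \<in> index_triples m" and y: "y \<in> index_triples m"
  obtain i j k where xe: "x = (i,j,k)" by (cases x) auto
  obtain i' j' k' where ye: "y = (i',j',k')" by (cases y) auto
  have o: "i < j" "j < k" "i' < j'" "j' < k'" using x y xe ye by (auto simp: index_triples_def)
  show "((\<lambda>(i,j,k). {i,j,k}) x = (\<lambda>(i,j,k). {i,j,k}) y) = (x = y)"
  proof
    assume "(\<lambda>(i,j,k). {i,j,k}) x = (\<lambda>(i,j,k). {i,j,k}) y"
    then have eq: "{i,j,k} = {i',j',k'}" using xe ye by simp
    have "Min {i,j,k} = i" "Max {i,j,k} = k" using o by (auto simp: min_def max_def)
    moreover have "Min {i',j',k'} = i'" "Max {i',j',k'} = k'" using o by (auto simp: min_def max_def)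
    ultimately have ik: "i = i'" "k = k'" using eq by metis+
    have "j \<in> {i',j',k'}" using eq by auto
    then have "j = j'" using ik o by auto
    then show "x = y" using ik xe ye by simp
  qed simp
next
  fix x assume x: "x \<in> index_triples m"
  obtain i j k where xe: "x = (i,j,k)" by (cases x) auto
  then show "(\<lambda>(i,j,k). {i,j,k}) x \<in> T3 m" using x by (auto simp: index_triples_def T3_def)
next
  fix S assume S: "S \<in> T3 m"
  then have fin: "finite S" by (auto simp: T3_def intro: finite_subset)
  obtain l where l: "sorted_wrt (<) l" "set l = S" "length l = card S"
    using sorted_list_of_set.finite_set_strict_sorted[OF fin] by blast
  have l3: "length l = 3" using l S by (simp add: T3_def)
  then have le: "l = [l!0, l!1, l!2]"
    by (metis (no_types, lifting) Cons_nth_drop_Suc One_nat_def Suc_1 drop0 drop_eq_Nil2 le_refl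
        lessI numeral_3_eq_3 zero_less_numeral less_trans_Suc pos2)
  have lt: "l!0 < l!1" "l!1 < l!2" using l(1) l3 by (auto simp: sorted_wrt_iff_nth_less)
  have Se: "S = {l!0, l!1, l!2}" using l(2) le by (metis list.set(1) list.set(2))
  have "l!2 < m" using S Se by (auto simp: T3_def)
  then have "(l!0, l!1, l!2) \<in> index_triples m" using lt by (simp add: index_triples_def)
  then show "\<exists>x\<in>index_triples m. S = (\<lambda>(i,j,k). {i,j,k}) x" using Se by force
qed

lemma IT_T3_sum:
  "(\<Sum>t\<in>index_triples m. \<psi> (case t of (i,j,k) \<Rightarrow> {#xs!i, xs!j, xs!k#}))
     = (\<Sum>S\<in>T3 m. \<psi> (image_mset (nth xs) (mset_set S)))"
proof -
  have "(\<Sum>S\<in>T3 m. \<psi> (image_mset (nth xs) (mset_set S)))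
      = (\<Sum>t\<in>index_triples m. \<psi> (image_mset (nth xs) (mset_set ((\<lambda>(i,j,k). {i,j,k}) t))))"
    by (rule sum.reindex_bij_betw[OF IT_T3_bij, symmetric])
  also have "\<dots> = (\<Sum>t\<in>index_triples m. \<psi> (case t of (i,j,k) \<Rightarrow> {#xs!i, xs!j, xs!k#}))"
    by (rule sum.cong) (auto simp: index_triples_def)
  finally show ?thesis by simp
qed

lemma T3_perm_sum:
  assumes p: "p permutes {..<m}"
  shows "(\<Sum>S\<in>T3 m. h (p ` S)) = (\<Sum>S\<in>T3 m. h S)"
proof (rule sum.reindex_bij_witness[where j="image p" and i="image (inv p)"])
  have inj: "inj p" using permutes_inj[OF p] .
  fix S assume S: "S \<in> T3 m"
  show "inv p ` p ` S = S" using inj by (simp add: image_comp)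
  have "p ` S \<subseteq> {..<m}" using S permutes_in_image[OF p] by (auto simp: T3_def)
  moreover have "card (p ` S) = card S" using inj by (simp add: card_image inj_on_subset)
  ultimately show "p ` S \<in> T3 m" using S by (simp add: T3_def)
  show "h (p ` S) = h (p ` S)" ..
next
  have pi: "inv p permutes {..<m}" using permutes_inv[OF p] .
  have inj: "inj (inv p)" using permutes_inj[OF pi] .
  fix S assume S: "S \<in> T3 m"
  show "p ` inv p ` S = S" using permutes_surj[OF p] by (simp add: image_comp surj_iff_all)
  have "inv p ` S \<subseteq> {..<m}" using S permutes_in_image[OF pi] by (auto simp: T3_def)
  moreover have "card (inv p ` S) = card S" using inj by (simp add: card_image inj_on_subset)
  ultimately show "inv p ` S \<in> T3 m" using S by (simp add: T3_def)
qed

definition psiT :: "nat multiset \<Rightarrow> nat multiset \<Rightarrow> nat multiset \<Rightarrow> real" where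
  "psiT K M' B = (if K - B + {#sum_mset B#} = M' then real (sum_mset B + 3) else 0)"

lemma Tsum_psi:
  "Tsum xs M' = (\<Sum>t\<in>index_triples (length xs). psiT (mset xs) M' (case t of (i,j,k) \<Rightarrow> {#xs!i, xs!j, xs!k#}))"
  unfolding Tsum_def by (rule sum.cong) (auto simp: psiT_def merge_triple_def triple_rate_def algebra_simps)

lemma Tsum_inv:
  assumes "mset u = mset xs"
  shows "Tsum u M' = Tsum xs M'"
proof -
  obtain p where p: "p permutes {..<length xs}" "permute_list p xs = u"
    using mset_eq_permutation[OF assms] by blast
  have len: "length u = length xs" using assms by (metis size_mset)
  let ?m = "length xs"
  have "Tsum u M' = (\<Sum>S\<in>T3 ?m. psiT (mset xs) M' (image_mset (nth u) (mset_set S)))"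
    unfolding Tsum_psi IT_T3_sum len assms ..
  also have "\<dots> = (\<Sum>S\<in>T3 ?m. psiT (mset xs) M' (image_mset (nth xs) (mset_set (p ` S))))"
  proof (rule sum.cong[OF refl])
    fix S assume S: "S \<in> T3 ?m"
    then have Ssub: "S \<subseteq> {..<?m}" by (simp add: T3_def)
    have "image_mset (nth u) (mset_set S) = image_mset (\<lambda>i. xs ! p i) (mset_set S)"
    proof (rule image_mset_cong)
      fix i assume "i \<in># mset_set S"
      then have "i \<in> S" by (metis elem_mset_set empty_iff mset_set.infinite set_mset_empty)
      then show "u ! i = xs ! p i" using Ssub p permute_list_nth[OF p(1)] by auto
    qed
    also have "\<dots> = image_mset (nth xs) (image_mset p (mset_set S))" by (simp add: multiset.map_comp o_def)
    also have "image_mset p (mset_set S) = mset_set (p ` S)"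
      using permutes_inj[OF p(1)] by (simp add: image_mset_mset_set inj_on_subset)
    finally show "psiT (mset xs) M' (image_mset (nth u) (mset_set S)) = psiT (mset xs) M' (image_mset (nth xs) (mset_set (p ` S)))" by simp
  qed
  also have "\<dots> = (\<Sum>S\<in>T3 ?m. psiT (mset xs) M' (image_mset (nth xs) (mset_set S)))"
    by (rule T3_perm_sum[OF p(1), where h="\<lambda>S. psiT (mset xs) M' (image_mset (nth xs) (mset_set S))"])
  also have "\<dots> = Tsum xs M'" unfolding Tsum_psi IT_T3_sum ..
  finally show ?thesis .
qed

definition Gt :: "nat multiset \<Rightarrow> nat list \<Rightarrow> nat \<times> nat \<times> nat \<Rightarrow> real" where
  "Gt M' u t = (if merge_triple u t = M' then real (triple_rate u t) else 0)"

lemma Gt_perm: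
  assumes p: "p permutes {..<length u}" and t: "a < length u" "b < length u" "c < length u"
  shows "Gt M' (permute_list p u) (a, b, c) = Gt M' u (p a, p b, p c)"
  using t by (simp add: Gt_def merge_triple_def triple_rate_def permute_list_nth[OF p] mset_permute_list[OF p])

lemma sym3:
  assumes t: "(i,j,k) \<in> index_triples m"
  shows "(\<Sum>u\<in>UL N m. Kw N u * Gt M' u (i,j,k)) = (\<Sum>u\<in>UL N m. Kw N u * Gt M' u (m-3, m-2, m-1))"
proof -
  have o: "i < j" "j < k" "k < m" using t by (auto simp: index_triples_def)
  define p where "p = Transposition.transpose (m-1) k \<circ> Transposition.transpose (m-2) j \<circ> Transposition.transpose (m-3) i"
  have p: "p permutes {..<m}" unfolding p_def using o
    by (intro permutes_compose permutes_swap_id) auto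
  have pv: "p (m-3) = i" "p (m-2) = j" "p (m-1) = k" unfolding p_def using o
    by (auto simp: transpose_def)
  have "(\<Sum>u\<in>UL N m. Kw N u * Gt M' u (m-3, m-2, m-1))
      = (\<Sum>u\<in>UL N m. Kw N (permute_list p u) * Gt M' (permute_list p u) (m-3, m-2, m-1))"
    by (rule UL_perm_sum[OF p])
  also have "\<dots> = (\<Sum>u\<in>UL N m. Kw N u * Gt M' u (i,j,k))"
  proof (rule sum.cong[OF refl])
    fix u assume "u \<in> UL N m"
    then have l: "length u = m" by (simp add: UL_def)
    have pu: "p permutes {..<length u}" using p l by simp
    show "Kw N (permute_list p u) * Gt M' (permute_list p u) (m-3, m-2, m-1) = Kw N u * Gt M' u (i,j,k)"
      using Kw_mset[OF mset_permute_list[OF pu]] Gt_perm[OF pu, of "m-3" "m-2" "m-1" M'] o l pv by simp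
  qed
  finally show ?thesis ..
qed

lemma Tsum_Gt: "Tsum u M' = (\<Sum>t\<in>index_triples (length u). Gt M' u t)"
  unfolding Tsum_def Gt_def ..

lemma main_A:
  "(\<Sum>u\<in>UL N m. Kw N u * Tsum u M')
     = real (card (index_triples m)) * (\<Sum>u\<in>UL N m. Kw N u * Gt M' u (m-3, m-2, m-1))"
proof -
  have "(\<Sum>u\<in>UL N m. Kw N u * Tsum u M') = (\<Sum>u\<in>UL N m. \<Sum>t\<in>index_triples m. Kw N u * Gt M' u t)"
    by (rule sum.cong) (auto simp: Tsum_Gt UL_def sum_distrib_left)
  also have "\<dots> = (\<Sum>t\<in>index_triples m. \<Sum>u\<in>UL N m. Kw N u * Gt M' u t)"
    by (rule sum.swap)
  also have "\<dots> = (\<Sum>t\<in>index_triples m. \<Sum>u\<in>UL N m. Kw N u * Gt M' u (m-3, m-2, m-1))"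
  proof (rule sum.cong[OF refl])
    fix t assume t: "t \<in> index_triples m"
    obtain i j k where "t = (i,j,k)" by (cases t) auto
    then show "(\<Sum>u\<in>UL N m. Kw N u * Gt M' u t) = (\<Sum>u\<in>UL N m. Kw N u * Gt M' u (m-3, m-2, m-1))"
      using sym3[of i j k m N M'] t by simp
  qed
  finally show ?thesis by simp
qed

definition Hf :: "nat \<Rightarrow> nat multiset \<Rightarrow> nat list \<Rightarrow> nat \<Rightarrow> real" where
  "Hf N M' v x = (if sum_list v + x = N \<and> add_mset x (mset v) = M' then prod_list (map fo v) else 0)"

definition Qf :: "nat \<Rightarrow> nat multiset \<Rightarrow> nat list \<Rightarrow> real" where
  "Qf N M' w = (if mset w = M' then Kw N w else 0)"

lemma pt3:
  assumes "length v = k"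
  shows "Kw N (v@[a,b,c]) * Gt M' (v@[a,b,c]) (k, Suc k, Suc (Suc k))
     = Hf N M' v (a+b+c) * (real (a+b+c) + 3) * (fo a * fo b * fo c)"
proof -
  have n: "(v@[a,b,c]) ! k = a" "(v@[a,b,c]) ! Suc k = b" "(v@[a,b,c]) ! Suc (Suc k) = c"
    using assms by (auto simp: nth_append)
  have m: "merge_triple (v@[a,b,c]) (k, Suc k, Suc (Suc k)) = add_mset (a+b+c) (mset v)"
    by (simp add: merge_triple_def n)
  have r: "triple_rate (v@[a,b,c]) (k, Suc k, Suc (Suc k)) = a+b+c+3"
    by (simp add: triple_rate_def n)
  show ?thesis unfolding Gt_def m r Kw_def Hf_def by (simp add: algebra_simps)
qed

lemma main_C:
  "(\<Sum>u\<in>UL N (Suc (Suc (Suc k))). Kw N u * Gt M' u (k, Suc k, Suc (Suc k)))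
    = (\<Sum>v\<in>UL N k. \<Sum>a\<le>N. \<Sum>b\<le>N. \<Sum>c\<le>N. Hf N M' v (a+b+c) * (real (a+b+c) + 3) * (fo a * fo b * fo c))"
  unfolding UL_Suc_sum
  by (intro sum.cong refl) (simp add: pt3 UL_def)

lemma delta_box:
  fixes G :: "nat \<Rightarrow> nat \<Rightarrow> nat \<Rightarrow> real"
  assumes "x \<le> N"
  shows "(\<Sum>a\<le>N. \<Sum>b\<le>N. \<Sum>c\<le>N. if x = a+b+c then G a b c else 0)
       = (\<Sum>a\<le>x. \<Sum>b\<le>x-a. G a b (x-a-b))"
proof -
  have 1: "(\<Sum>c\<le>N. if x = a+b+c then G a b c else 0) = (if a+b \<le> x then G a b (x-a-b) else 0)" for a b
  proof -
    have "(\<Sum>c\<le>N. if x = a+b+c then G a b c else 0) = (\<Sum>c\<le>N. if c = x-a-b \<and> a+b \<le> x then G a b c else 0)"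
      by (rule sum.cong) auto
    also have "\<dots> = (if a+b \<le> x then G a b (x-a-b) else 0)"
      using assms by (cases "a+b \<le> x") (auto simp: sum.delta')
    finally show ?thesis .
  qed
  have 2: "(\<Sum>b\<le>N. if a+b \<le> x then G a b (x-a-b) else 0) = (if a \<le> x then (\<Sum>b\<le>x-a. G a b (x-a-b)) else 0)" for a
  proof -
    have "(\<Sum>b\<le>N. if a+b \<le> x then G a b (x-a-b) else 0) = (\<Sum>b\<in>{b\<in>{..N}. a+b \<le> x}. G a b (x-a-b))"
      by (rule sum.inter_filter[symmetric]) simp
    also have "{b\<in>{..N}. a+b \<le> x} = (if a \<le> x then {..x-a} else {})" using assms by auto
    finally show ?thesis by simp
  qed
  have 3: "(\<Sum>a\<le>N. if a \<le> x then (\<Sum>b\<le>x-a. G a b (x-a-b)) else 0) = (\<Sum>a\<le>x. \<Sum>b\<le>x-a. G a b (x-a-b))"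
  proof -
    have "(\<Sum>a\<le>N. if a \<le> x then (\<Sum>b\<le>x-a. G a b (x-a-b)) else 0) = (\<Sum>a\<in>{a\<in>{..N}. a \<le> x}. \<Sum>b\<le>x-a. G a b (x-a-b))"
      by (rule sum.inter_filter[symmetric]) simp
    also have "{a\<in>{..N}. a \<le> x} = {..x}" using assms by auto
    finally show ?thesis .
  qed
  show ?thesis unfolding 1 2 3 ..
qed

lemma L_tri:
  fixes F \<phi> :: "nat \<Rightarrow> real"
  assumes z: "\<And>x. N < x \<Longrightarrow> \<phi> x = 0"
  shows "(\<Sum>a\<le>N. \<Sum>b\<le>N. \<Sum>c\<le>N. \<phi> (a+b+c) * (F a * F b * F c))
       = (\<Sum>x\<le>N. \<phi> x * (\<Sum>a\<le>x. F a * (\<Sum>b\<le>x-a. F b * F (x-a-b))))"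
proof -
  have e: "\<phi> y * t = (\<Sum>x\<le>N. if x = y then \<phi> x * t else 0)" for y t
    using z[of y] by (cases "y \<le> N") (auto simp: sum.delta)
  have "(\<Sum>a\<le>N. \<Sum>b\<le>N. \<Sum>c\<le>N. \<phi> (a+b+c) * (F a * F b * F c))
      = (\<Sum>a\<le>N. \<Sum>b\<le>N. \<Sum>c\<le>N. \<Sum>x\<le>N. if x = a+b+c then \<phi> x * (F a * F b * F c) else 0)"
    by (intro sum.cong refl) (rule e)
  also have "\<dots> = (\<Sum>x\<le>N. \<Sum>a\<le>N. \<Sum>b\<le>N. \<Sum>c\<le>N. if x = a+b+c then \<phi> x * (F a * F b * F c) else 0)"
  proof -
    define T where "T a b c x = (if x = a+b+c then \<phi> x * (F a * F b * F c) else 0)" for a b c x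
    have "(\<Sum>a\<le>N. \<Sum>b\<le>N. \<Sum>c\<le>N. \<Sum>x\<le>N. T a b c x) = (\<Sum>a\<le>N. \<Sum>b\<le>N. \<Sum>x\<le>N. \<Sum>c\<le>N. T a b c x)"
      by (rule sum.cong[OF refl], rule sum.cong[OF refl], rule sum.swap)
    also have "\<dots> = (\<Sum>a\<le>N. \<Sum>x\<le>N. \<Sum>b\<le>N. \<Sum>c\<le>N. T a b c x)"
      by (rule sum.cong[OF refl], rule sum.swap)
    also have "\<dots> = (\<Sum>x\<le>N. \<Sum>a\<le>N. \<Sum>b\<le>N. \<Sum>c\<le>N. T a b c x)"
      by (rule sum.swap)
    finally show ?thesis unfolding T_def .
  qed
  also have "\<dots> = (\<Sum>x\<le>N. \<phi> x * (\<Sum>a\<le>x. F a * (\<Sum>b\<le>x-a. F b * F (x-a-b))))"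
  proof (rule sum.cong[OF refl])
    fix x assume x: "x \<in> {..N}"
    have "(\<Sum>a\<le>N. \<Sum>b\<le>N. \<Sum>c\<le>N. if x = a+b+c then \<phi> x * (F a * F b * F c) else 0)
        = (\<Sum>a\<le>x. \<Sum>b\<le>x-a. \<phi> x * (F a * F b * F (x-a-b)))"
      using delta_box[of x N "\<lambda>a b c. \<phi> x * (F a * F b * F c)"] x by simp
    also have "\<dots> = \<phi> x * (\<Sum>a\<le>x. F a * (\<Sum>b\<le>x-a. F b * F (x-a-b)))"
      by (simp add: sum_distrib_left mult_ac)
    finally show "(\<Sum>a\<le>N. \<Sum>b\<le>N. \<Sum>c\<le>N. if x = a+b+c then \<phi> x * (F a * F b * F c) else 0)
        = \<phi> x * (\<Sum>a\<le>x. F a * (\<Sum>b\<le>x-a. F b * F (x-a-b)))" .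
  qed
  finally show ?thesis .
qed

lemma main_E:
  "(\<Sum>v\<in>UL N k. \<Sum>x\<le>N. Hf N M' v x * (3 * (real x - 1) * fo x))
    = (\<Sum>w\<in>UL N (Suc k). Qf N M' w * (3 * (real (w!k) - 1)))"
  unfolding UL_Suc_sum
  by (intro sum.cong refl) (auto simp: Qf_def Hf_def Kw_def UL_def nth_append)

lemma symlast:
  fixes g :: "nat \<Rightarrow> real"
  assumes m: "m \<ge> 1"
    and Qinv: "\<And>w p. w \<in> UL N m \<Longrightarrow> p permutes {..<m} \<Longrightarrow> Q (permute_list p w) = Q w"
  shows "real m * (\<Sum>w\<in>UL N m. Q w * g (w!(m-1))) = (\<Sum>w\<in>UL N m. Q w * (\<Sum>i<m. g (w!i)))"
proof -
  have each: "(\<Sum>w\<in>UL N m. Q w * g (w!(m-1))) = (\<Sum>w\<in>UL N m. Q w * g (w!i))" if i: "i < m" for i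
  proof -
    define p where "p = Transposition.transpose i (m-1)"
    have p: "p permutes {..<m}" unfolding p_def using i m by (intro permutes_swap_id) auto
    have "(\<Sum>w\<in>UL N m. Q w * g (w!(m-1))) = (\<Sum>w\<in>UL N m. Q (permute_list p w) * g ((permute_list p w)!(m-1)))"
      by (rule UL_perm_sum[OF p])
    also have "\<dots> = (\<Sum>w\<in>UL N m. Q w * g (w!i))"
    proof (rule sum.cong[OF refl])
      fix w assume w: "w \<in> UL N m"
      then have l: "length w = m" by (simp add: UL_def)
      have "(permute_list p w)!(m-1) = w ! p (m-1)" using p l m by (intro permute_list_nth) auto
      also have "p (m-1) = i" unfolding p_def by simp
      finally show "Q (permute_list p w) * g ((permute_list p w)!(m-1)) = Q w * g (w!i)"
        using Qinv[OF w p] by simp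
    qed
    finally show ?thesis .
  qed
  have "real m * (\<Sum>w\<in>UL N m. Q w * g (w!(m-1))) = (\<Sum>i<m. \<Sum>w\<in>UL N m. Q w * g (w!(m-1)))"
    by simp
  also have "\<dots> = (\<Sum>i<m. \<Sum>w\<in>UL N m. Q w * g (w!i))"
    by (rule sum.cong[OF refl]) (use each in auto)
  also have "\<dots> = (\<Sum>w\<in>UL N m. Q w * (\<Sum>i<m. g (w!i)))"
    by (subst sum.swap) (simp add: sum_distrib_left)
  finally show ?thesis .
qed

lemma Qf_perm: "p permutes {..<length w} \<Longrightarrow> Qf N M' (permute_list p w) = Qf N M' w"
  using Kw_mset[OF mset_permute_list] by (simp add: Qf_def)

lemma main_sum:
  assumes "3 \<le> m"
  shows "(\<Sum>u\<in>UL N m. Kw N u * Tsum u M')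
     = real (card (index_triples m)) * (3 * (real N - real (m-2)) / real (m-2)) * (\<Sum>w\<in>UL N (m-2). Qf N M' w)"
proof -
  define k where "k = m - 3"
  have k: "m = Suc (Suc (Suc k))" using assms unfolding k_def by simp
  have m3: "m - 3 = k" "m - 2 = Suc k" "m - 1 = Suc (Suc k)" using k by auto
  have inner: "(\<Sum>a\<le>N. \<Sum>b\<le>N. \<Sum>c\<le>N. Hf N M' v (a+b+c) * (real (a+b+c) + 3) * (fo a * fo b * fo c))
      = (\<Sum>x\<le>N. Hf N M' v x * (3 * (real x - 1) * fo x))" for v
  proof -
    have "(\<Sum>a\<le>N. \<Sum>b\<le>N. \<Sum>c\<le>N. Hf N M' v (a+b+c) * (real (a+b+c) + 3) * (fo a * fo b * fo c))
        = (\<Sum>x\<le>N. (Hf N M' v x * (real x + 3)) * (\<Sum>a\<le>x. fo a * (\<Sum>b\<le>x-a. fo b * fo (x-a-b))))"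
      by (rule L_tri[where \<phi>="\<lambda>x. Hf N M' v x * (real x + 3)"]) (simp add: Hf_def)
    also have "\<dots> = (\<Sum>x\<le>N. Hf N M' v x * (3 * (real x - 1) * fo x))"
    proof (rule sum.cong[OF refl])
      fix x
      show "(Hf N M' v x * (real x + 3)) * (\<Sum>a\<le>x. fo a * (\<Sum>b\<le>x-a. fo b * fo (x-a-b)))
          = Hf N M' v x * (3 * (real x - 1) * fo x)"
        using C3[of x] by (simp only: mult.assoc)
    qed
    finally show ?thesis .
  qed
  have sl: "real (Suc k) * (\<Sum>w\<in>UL N (Suc k). Qf N M' w * (3 * (real (w!(Suc k - 1)) - 1)))
      = (\<Sum>w\<in>UL N (Suc k). Qf N M' w * (\<Sum>i<Suc k. 3 * (real (w!i) - 1)))"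
    by (rule symlast) (simp_all add: UL_def Qf_perm)
  have "(\<Sum>w\<in>UL N (Suc k). Qf N M' w * (\<Sum>i<Suc k. 3 * (real (w!i) - 1)))
      = (\<Sum>w\<in>UL N (Suc k). Qf N M' w * (3 * (real N - real (Suc k))))"
  proof (rule sum.cong[OF refl])
    fix w assume w: "w \<in> UL N (Suc k)"
    then have l: "length w = Suc k" by (simp add: UL_def)
    have s: "real (sum_list w) = (\<Sum>i<Suc k. real (w!i))" using l by (simp add: sum_list_sum_nth atLeast0LessThan)
    have "(\<Sum>i<Suc k. 3 * (real (w!i) - 1)) = 3 * (\<Sum>i<Suc k. real (w!i)) - 3 * real (Suc k)"
      by (simp add: sum_subtractf sum_distrib_left)
    then have "(\<Sum>i<Suc k. 3 * (real (w!i) - 1)) = 3 * (real (sum_list w) - real (Suc k))"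
      unfolding s by (simp add: algebra_simps)
    then show "Qf N M' w * (\<Sum>i<Suc k. 3 * (real (w!i) - 1)) = Qf N M' w * (3 * (real N - real (Suc k)))"
      by (auto simp: Qf_def Kw_def)
  qed
  note e = this
  have e2: "(\<Sum>w\<in>UL N (Suc k). Qf N M' w * (3 * (real N - real (Suc k))))
     = (\<Sum>w\<in>UL N (Suc k). Qf N M' w) * (3 * (real N - real (Suc k)))"
    by (rule sum_distrib_right[symmetric])
  have "real (Suc k) * (\<Sum>w\<in>UL N (Suc k). Qf N M' w * (3 * (real (w!k) - 1)))
     = (\<Sum>w\<in>UL N (Suc k). Qf N M' w) * (3 * (real N - real (Suc k)))"
    using sl unfolding e e2 by simp
  then have sl2: "(\<Sum>w\<in>UL N (Suc k). Qf N M' w * (3 * (real (w!k) - 1)))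
      = 3 * (real N - real (Suc k)) / real (Suc k) * (\<Sum>w\<in>UL N (Suc k). Qf N M' w)"
    by (simp add: field_simps del: of_nat_Suc)
  have "(\<Sum>u\<in>UL N m. Kw N u * Tsum u M')
     = real (card (index_triples m)) * (\<Sum>u\<in>UL N (Suc (Suc (Suc k))). Kw N u * Gt M' u (k, Suc k, Suc (Suc k)))"
    unfolding main_A m3 using k by simp
  also have "(\<Sum>u\<in>UL N (Suc (Suc (Suc k))). Kw N u * Gt M' u (k, Suc k, Suc (Suc k)))
     = (\<Sum>v\<in>UL N k. \<Sum>x\<le>N. Hf N M' v x * (3 * (real x - 1) * fo x))"
    unfolding main_C by (rule sum.cong[OF refl]) (rule inner)
  also have "\<dots> = (\<Sum>w\<in>UL N (Suc k). Qf N M' w * (3 * (real (w!k) - 1)))" by (rule main_E)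
  also have "\<dots> = 3 * (real N - real (Suc k)) / real (Suc k) * (\<Sum>w\<in>UL N (Suc k). Qf N M' w)" by (rule sl2)
  finally show ?thesis unfolding m3 by simp
qed

definition cc :: "nat \<Rightarrow> nat \<Rightarrow> real" where
  "cc N l = real N / (real (N - 2*l) * real (N choose l))"

lemma sum_list_ge_length: "\<forall>x\<in>set u. (1::nat) \<le> x \<Longrightarrow> length u \<le> sum_list u"
  by (induction u) auto

lemma all_ones: "\<forall>x\<in>set u. (1::nat) \<le> x \<Longrightarrow> sum_list u = length u \<Longrightarrow> u = replicate (length u) 1"
proof (induction u)
  case Nil then show ?case by simp
next
  case (Cons x u)
  have "length u \<le> sum_list u" using Cons.prems(1) by (intro sum_list_ge_length) auto
  then have "x = 1" "sum_list u = length u" using Cons.prems by auto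
  then show ?case using Cons by auto
qed

lemma Kw_nz: "Kw N u \<noteq> 0 \<Longrightarrow> sum_list u = N \<and> (\<forall>x\<in>set u. odd x)"
proof -
  assume h: "Kw N u \<noteq> 0"
  then have s: "sum_list u = N" and p: "prod_list (map fo u) \<noteq> 0" by (auto simp: Kw_def split: if_splits)
  have "\<forall>x\<in>set u. odd x"
  proof
    fix x assume "x \<in> set u"
    then have "fo x \<noteq> 0" using p by (auto simp: prod_list_zero_iff)
    then show "odd x" using fo_even by blast
  qed
  with s show ?thesis by simp
qed

lemma base_sum:
  assumes "N \<ge> 1"
  shows "(\<Sum>u\<in>UL N N. Qf N M u) = (if M = replicate_mset N 1 then 1 else 0)"
proof -
  have "(\<Sum>u\<in>UL N N. Qf N M u) = (\<Sum>u\<in>UL N N. if u = replicate N 1 then Qf N M u else 0)"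
  proof (rule sum.cong[OF refl])
    fix u assume u: "u \<in> UL N N"
    show "Qf N M u = (if u = replicate N 1 then Qf N M u else 0)"
    proof (cases "Kw N u = 0")
      case True then show ?thesis by (simp add: Qf_def)
    next
      case False
      then have h: "sum_list u = N" "\<forall>x\<in>set u. odd x" using Kw_nz by blast+
      then have "\<forall>x\<in>set u. (1::nat) \<le> x" by (auto intro: odd_pos[THEN Suc_leI, simplified])
      moreover have "length u = N" using u by (simp add: UL_def)
      ultimately have "u = replicate N 1" using all_ones h by metis
      then show ?thesis by simp
    qed
  qed
  also have "\<dots> = Qf N M (replicate N 1)"
  proof -
    have "replicate N 1 \<in> UL N N" using assms by (auto simp: UL_def)
    then show ?thesis by (simp add: sum.delta' del: One_nat_def)
  qed
  also have "\<dots> = (if M = replicate_mset N 1 then 1 else 0)"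
    using fo_1 by (auto simp: Qf_def Kw_def sum_list_replicate)
  finally show ?thesis .
qed

definition Rm :: "nat \<Rightarrow> nat \<Rightarrow> real" where
  "Rm N m = 3 * real m * (real m - 1) * (real m - 2) / 6 + (real m - 1) * (real m - 2) / 2 * real N"

lemma step_eq:
  assumes u: "u \<in> UL N m" and m: "3 \<le> m"
  shows "Kw N u * pmf (ternary_step (mset u)) M' = Kw N u * Tsum u M' / Rm N m"
proof (cases "Kw N u = 0")
  case True then show ?thesis by simp
next
  case False
  then have s: "sum_list u = N" using Kw_nz by blast
  have l: "length u = m" using u by (simp add: UL_def)
  define xs where "xs = sorted_list_of_multiset (mset u)"
  have mx: "mset xs = mset u" unfolding xs_def by simp
  have lx: "length xs = m" using mx l by (metis size_mset)
  have sx: "sum_list xs = N" using mx s by (metis sum_mset_sum_list)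
  have "pmf (ternary_step (mset u)) M' = Tsum xs M' / Rsum xs"
    unfolding xs_def using m l by (intro step_pmf) simp
  also have "Tsum xs M' = Tsum u M'" using Tsum_inv[OF mx[symmetric]] by simp
  also have "Rsum xs = Rm N m" unfolding Rsum_formula lx sx Rm_def ..
  finally show ?thesis by simp
qed

lemma cc_alg0:
  fixes N x C a b d e :: real
  assumes "a \<noteq> 0" "b \<noteq> 0" "x \<noteq> 0" "d \<noteq> 0" "C \<noteq> 0"
  shows "N / (x * C) / (b * a * d / 2) * (x * b * a / 6) * (3 * e / a) = N * e / (C * d * a)"
  using assms by (simp add: field_simps)
lemma cc_alg1:
  fixes N C a f g :: real
  assumes "a \<noteq> 0" "f \<noteq> 0" "g \<noteq> 0" "C \<noteq> 0"
  shows "N * (2 * g) / (C * (2 * f) * a) = N / (a * (f * C / g))"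
  using assms by (simp add: field_simps)
lemma cc_alg:
  fixes N x C l :: real
  assumes x: "x = N - 2*l" and p: "x - 2 > 0" "x - 1 > 0" "x > 0" "x + N > 0" "N - l > 0" "l + 1 > 0" "C > 0"
  shows "N / (x * C) / ((x - 1) * (x - 2) * (x + N) / 2) * (x * (x - 1) * (x - 2) / 6) * (3 * (N - (x - 2)) / (x - 2))
    = N / ((x - 2) * ((N - l) * C / (l + 1)))"
proof -
  have s1: "N / (x * C) / ((x - 1) * (x - 2) * (x + N) / 2) * (x * (x - 1) * (x - 2) / 6) * (3 * (N - (x - 2)) / (x - 2))
     = N * (N - (x - 2)) / (C * (x + N) * (x - 2))"
    by (rule cc_alg0) (use p in auto)
  have e1: "N - (x - 2) = 2 * (l + 1)" using x by simp
  have e2: "x + N = 2 * (N - l)" using x by simp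
  have s2: "N * (2 * (l + 1)) / (C * (2 * (N - l)) * (x - 2)) = N / ((x - 2) * ((N - l) * C / (l + 1)))"
    by (rule cc_alg1) (use p in auto)
  show ?thesis using s1 s2 unfolding e1 e2 by (rule trans)
qed

lemma cc_rec:
  assumes N: "N = 2*n+1" and l: "Suc l \<le> n"
  shows "cc N l / Rm N (N - 2*l) * (real (N - 2*l) * (real (N - 2*l) - 1) * (real (N - 2*l) - 2) / 6)
           * (3 * (real N - real (N - 2*l - 2)) / real (N - 2*l - 2)) = cc N (Suc l)"
proof -
  define m where "m = N - 2*l"
  have mr: "real m = real N - 2 * real l" using N l unfolding m_def by (simp add: of_nat_diff)
  have m2: "real (m - 2) = real m - 2" using N l unfolding m_def by (simp add: of_nat_diff)
  have m2': "N - 2 * Suc l = N - 2*l - 2" by simp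
  have b: "real (Suc l) * real (N choose Suc l) = (real N - real l) * real (N choose l)"
  proof -
    have "Suc l * (N choose Suc l) = N * ((N - 1) choose l)"
      using Suc_times_binomial[of l "N-1"] N by simp
    also have "\<dots> = (N - l) * (N choose l)" using binomial_absorb_comp[of N l] by simp
    finally have e: "real (Suc l * (N choose Suc l)) = real ((N - l) * (N choose l))" by (simp only:)
    have "real ((N - l) * (N choose l)) = (real N - real l) * real (N choose l)"
      using N l by (simp add: of_nat_diff)
    then show ?thesis using e by (simp only: of_nat_mult)
  qed
  have "N choose l > 0" using N l by (simp_all add: zero_less_binomial_iff)
  then have Cpos: "real (N choose l) > 0" by simp_all
  have ln: "real l + 1 \<le> real n" using l by linarith
  have Nr: "real N = 2 * real n + 1" using N by simp
  have Rm: "Rm N m = (real m - 1) * (real m - 2) * (real m + real N) / 2" unfolding Rm_def by (simp add: field_simps)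
  have pos: "real m - 2 > 0" "real m - 1 > 0" "real m > 0" "real m + real N > 0" "real N - real l > 0" "real l + 1 > 0"
    using mr ln Nr by linarith+
  have cs: "real (N choose Suc l) = (real N - real l) * real (N choose l) / (real l + 1)"
    using b pos by (simp add: field_simps)
  show ?thesis
    unfolding cc_def m2' m_def[symmetric] m2 Rm cs
    by (rule cc_alg) (use mr pos Cpos in auto)
qed

lemma chain:
  assumes "l \<le> n"
  shows "pmf (skeleton_chain (2*n+1) l) M = cc (2*n+1) l * (\<Sum>u\<in>UL (2*n+1) (2*n+1-2*l). Qf (2*n+1) M u)"
  using assms
proof (induction l arbitrary: M)
  case 0
  have "cc (2*n+1) 0 = 1" by (simp add: cc_def)
  then show ?case using base_sum[of "2*n+1" M] by (simp add: indicator_def)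
next
  case (Suc l)
  define N where "N = 2*n+1"
  define m where "m = N - 2*l"
  have m3: "3 \<le> m" using Suc.prems unfolding m_def N_def by simp
  have mm: "m - 2 = N - 2 * Suc l" unfolding m_def by simp
  have IH: "\<And>M. pmf (skeleton_chain N l) M = cc N l * (\<Sum>u\<in>UL N m. Qf N M u)"
    using Suc.IH Suc.prems unfolding N_def m_def by simp
  define A where "A = mset ` UL N m"
  have finA: "finite A" unfolding A_def by simp
  define P where "P K = pmf (ternary_step K) M" for K
  have "pmf (skeleton_chain N (Suc l)) M = measure_pmf.expectation (skeleton_chain N l) P"
    by (simp add: pmf_bind P_def[abs_def])
  also have "\<dots> = (\<Sum>K\<in>A. pmf (skeleton_chain N l) K *\<^sub>R P K)"
  proof (rule integral_measure_pmf[OF finA])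
    fix a assume a: "a \<in> set_pmf (skeleton_chain N l)"
    then have "pmf (skeleton_chain N l) a \<noteq> 0" by (simp add: set_pmf_eq)
    then have "(\<Sum>u\<in>UL N m. Qf N a u) \<noteq> 0" using IH by auto
    then obtain u where u: "u \<in> UL N m" "Qf N a u \<noteq> 0" by (meson sum.not_neutral_contains_not_neutral)
    then have "mset u = a" by (simp add: Qf_def split: if_splits)
    then show "a \<in> A" using u unfolding A_def by blast
  qed
  also have "\<dots> = (\<Sum>K\<in>A. \<Sum>u\<in>UL N m. cc N l * (Qf N K u * P K))"
    by (simp add: IH sum_distrib_left sum_distrib_right mult_ac)
  also have "\<dots> = (\<Sum>u\<in>UL N m. \<Sum>K\<in>A. cc N l * (Qf N K u * P K))"
    by (rule sum.swap)
  also have "\<dots> = (\<Sum>u\<in>UL N m. cc N l * (Kw N u * P (mset u)))"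
  proof (rule sum.cong[OF refl])
    fix u assume u: "u \<in> UL N m"
    have "mset u \<in> A" using u unfolding A_def by blast
    have "(\<Sum>K\<in>A. cc N l * (Qf N K u * P K)) = (\<Sum>K\<in>A. if mset u = K then cc N l * (Kw N u * P K) else 0)"
      by (rule sum.cong) (auto simp: Qf_def)
    also have "\<dots> = cc N l * (Kw N u * P (mset u))"
      using \<open>mset u \<in> A\<close> finA by (simp add: sum.delta)
    finally show "(\<Sum>K\<in>A. cc N l * (Qf N K u * P K)) = cc N l * (Kw N u * P (mset u))" .
  qed
  also have "\<dots> = (\<Sum>u\<in>UL N m. cc N l / Rm N m * (Kw N u * Tsum u M))"
  proof (rule sum.cong[OF refl])
    fix u assume u: "u \<in> UL N m"
    show "cc N l * (Kw N u * P (mset u)) = cc N l / Rm N m * (Kw N u * Tsum u M)"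
      unfolding P_def step_eq[OF u m3] by simp
  qed
  also have "\<dots> = cc N l / Rm N m * (\<Sum>u\<in>UL N m. Kw N u * Tsum u M)"
    by (simp add: sum_distrib_left)
  also have "\<dots> = cc N l / Rm N m * (real (card (index_triples m)) * (3 * (real N - real (m-2)) / real (m-2))
      * (\<Sum>w\<in>UL N (m-2). Qf N M w))"
    unfolding main_sum[OF m3] ..
  also have "\<dots> = (cc N l / Rm N m * (real m * (real m - 1) * (real m - 2) / 6) * (3 * (real N - real (m-2)) / real (m-2)))
      * (\<Sum>w\<in>UL N (m-2). Qf N M w)"
    unfolding card_IT by (simp only: mult_ac)
  also have "cc N l / Rm N m * (real m * (real m - 1) * (real m - 2) / 6) * (3 * (real N - real (m-2)) / real (m-2)) = cc N (Suc l)"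
    unfolding m_def using cc_rec[OF N_def Suc.prems] by simp
  finally show ?case unfolding mm N_def by simp
qed

theorem corollary2p5:
  fixes n l :: nat and s :: "nat list"
  defines "N \<equiv> 2 * n + 1"
  assumes "l \<le> n"
    and "sorted_wrt (\<ge>) s"
    and "length s = N - 2 * l"
    and "\<forall>x\<in>set s. odd x \<and> x > 0"
    and "sum_list s = N"
  shows "pmf (skeleton_chain N l) (mset s) =
           gamma_coef s * (real N / real (N - 2 * l)) * inverse (real (N choose l)) *
           (\<Prod>i<N - 2 * l. (1 / real (s ! i)) * real (s ! i choose ((s ! i + 1) div 2)))"
proof -
  define m where "m = N - 2*l"
  have ch: "pmf (skeleton_chain N l) (mset s) = cc N l * (\<Sum>u\<in>UL N m. Qf N (mset s) u)"
    unfolding N_def m_def using chain[OF assms(2)] by simp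
  have setle: "set s \<subseteq> {..N}" using assms(6) member_le_sum_list[of _ s] by auto
  have perm: "{u \<in> UL N m. mset u = mset s} = permutations_of_multiset (mset s)"
  proof
    show "{u \<in> UL N m. mset u = mset s} \<subseteq> permutations_of_multiset (mset s)"
      by (auto simp: permutations_of_multiset_def)
    show "permutations_of_multiset (mset s) \<subseteq> {u \<in> UL N m. mset u = mset s}"
    proof
      fix u assume "u \<in> permutations_of_multiset (mset s)"
      then have u: "mset u = mset s" by (simp add: permutations_of_multiset_def)
      have "length u = length s" using u by (metis size_mset)
      moreover have "set u = set s" using u by (metis set_mset_mset)
      ultimately have "length u = m" "set u = set s" using assms(4) unfolding m_def by simp_all
      then show "u \<in> {u \<in> UL N m. mset u = mset s}" using u setle by (simp add: UL_def)
    qed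
  qed
  have "(\<Sum>u\<in>UL N m. Qf N (mset s) u) = (\<Sum>u\<in>UL N m. if mset u = mset s then Kw N s else 0)"
    by (rule sum.cong) (auto simp: Qf_def intro: Kw_mset)
  also have "\<dots> = (\<Sum>u\<in>{u \<in> UL N m. mset u = mset s}. Kw N s)"
    by (rule sum.inter_filter[symmetric]) simp
  also have "\<dots> = real (card (permutations_of_multiset (mset s))) * Kw N s"
    unfolding perm by simp
  finally have S: "(\<Sum>u\<in>UL N m. Qf N (mset s) u) = real (card (permutations_of_multiset (mset s))) * Kw N s" .
  have g: "real (card (permutations_of_multiset (mset s))) = gamma_coef s"
  proof -
    have "real (card (permutations_of_multiset (mset s))) * (\<Prod>x\<in>set_mset (mset s). fact (count (mset s) x)) = fact (size (mset s))"
    proof -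
      have "card (permutations_of_multiset (mset s)) * (\<Prod>x\<in>set_mset (mset s). fact (count (mset s) x)) = fact (size (mset s))"
        by (rule card_permutations_of_multiset_aux)
      then have "real (card (permutations_of_multiset (mset s)) * (\<Prod>x\<in>set_mset (mset s). fact (count (mset s) x))) = real (fact (size (mset s)))"
        by (rule arg_cong)
      then show ?thesis by (simp only: of_nat_mult of_nat_prod of_nat_fact)
    qed
    moreover have "(\<Prod>x\<in>set_mset (mset s). fact (count (mset s) x) :: real) = (\<Prod>v\<in>set s. fact (count_list s v))"
      by (simp add: count_mset)
    moreover have "(\<Prod>v\<in>set s. fact (count_list s v) :: real) > 0" by (simp add: prod_pos)
    ultimately show ?thesis unfolding gamma_coef_def by (simp add: field_simps)
  qed
  have K: "Kw N s = (\<Prod>i<N - 2 * l. (1 / real (s ! i)) * real (s ! i choose ((s ! i + 1) div 2)))"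
  proof -
    have "Kw N s = prod_list (map fo s)" using assms(6) by (simp add: Kw_def)
    also have "\<dots> = (\<Prod>i<length s. fo (s ! i))"
      by (subst prod.list_conv_set_nth) (simp add: atLeast0LessThan)
    also have "\<dots> = (\<Prod>i<N - 2 * l. (1 / real (s ! i)) * real (s ! i choose ((s ! i + 1) div 2)))"
    proof (rule prod.cong)
      show "{..<length s} = {..<N - 2 * l}" using assms(4) by simp
    next
      fix i assume "i \<in> {..<N - 2 * l}"
      then have "s ! i \<in> set s" using assms(4) by simp
      then have "odd (s ! i)" using assms(5) by blast
      then show "fo (s ! i) = (1 / real (s ! i)) * real (s ! i choose ((s ! i + 1) div 2))"
        by (simp add: fo_def)
    qed
    finally show ?thesis .
  qed
  have "pmf (skeleton_chain N l) (mset s) = cc N l * (gamma_coef s * Kw N s)" using ch S g by simp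
  then show ?thesis unfolding K cc_def m_def by (simp only: divide_inverse inverse_mult_distrib mult_ac)
qed

end
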